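(* Let $T:[0,1]\to[0,1]$ be a nonsingular measurable map with transfer operator $L$, let $\rho_\xi=\xi^{-1}\mathbf 1_{[-\xi/2,\xi/2]}$ and $N_\xi$ the associated noise operator. Suppose $\|(N_\xi L)^i\|_{V\to L^1}<1$ for some $i$. Then for each $\hat\xi>\xi$, $\|(N_{\hat\xi}L)^i\|_{V\to L^1}<1$, and the system is mixing for every noise size greater than $\xi$.
   Context: $L$ is the pushforward by $T$ on $L^1([0,1])$. With $\pi(x)=\min_{i\in\mathbb Z}|x-2i|$, $N_\xi f=\pi_*(\rho_\xi*\hat f)$ ($\hat f$ the extension of $f$ by $0$, $\pi_*$ pushforward by $\pi$). $V=\{\nu\in L^1([0,1]):\int\nu=0\}$ and $\|\cdot\|_{V\to L^1}$ is the $L^1$ operator norm of the restriction to $V$. The system with noise size $\hat\xi$ is called mixing if $\|(N_{\hat\xi}L)^n\nu\|_{L^1}\to0$ as $n\to\infty$ for every $\nu\in V$. *)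

theory Defs
  imports "HOL-Analysis.Analysis"
begin

abbreviation I01 :: "real measure" where
  "I01 \<equiv> lebesgue_on {0..1}"

text \<open>Pushforward of a (signed) density f on M by a map S : M \<rightarrow> N, as a density on N
  (Radon--Nikodym derivative of the image of f M, split into positive and negative parts).\<close>
definition push_dens :: "'a measure \<Rightarrow> 'b measure \<Rightarrow> ('a \<Rightarrow> 'b) \<Rightarrow> ('a \<Rightarrow> real) \<Rightarrow> 'b \<Rightarrow> real" where
  "push_dens M N S f = (\<lambda>y.
     enn2real (RN_deriv N (distr (density M (\<lambda>x. ennreal (f x))) N S) y)
   - enn2real (RN_deriv N (distr (density M (\<lambda>x. ennreal (- f x))) N S) y))"

definition transfer_op :: "(real \<Rightarrow> real) \<Rightarrow> (real \<Rightarrow> real) \<Rightarrow> real \<Rightarrow> real" where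
  "transfer_op T = push_dens I01 I01 T"

definition nonsingular :: "(real \<Rightarrow> real) \<Rightarrow> bool" where
  "nonsingular T \<longleftrightarrow> T \<in> measurable I01 I01 \<and>
     (\<forall>A\<in>sets I01. emeasure I01 A = 0 \<longrightarrow> emeasure I01 (T -` A \<inter> space I01) = 0)"

definition rho :: "real \<Rightarrow> real \<Rightarrow> real" where
  "rho \<xi> x = (if x \<in> {-\<xi>/2..\<xi>/2} then 1 / \<xi> else 0)"

definition conv :: "(real \<Rightarrow> real) \<Rightarrow> (real \<Rightarrow> real) \<Rightarrow> real \<Rightarrow> real" where
  "conv g h = (\<lambda>y. \<integral>x. g (y - x) * h x \<partial>lebesgue)"

definition ext0 :: "(real \<Rightarrow> real) \<Rightarrow> real \<Rightarrow> real" where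
  "ext0 f x = (if x \<in> {0..1} then f x else 0)"

definition fold_pi :: "real \<Rightarrow> real" where
  "fold_pi x = (INF i\<in>(UNIV::int set). \<bar>x - 2 * of_int i\<bar>)"

definition noise_op :: "real \<Rightarrow> (real \<Rightarrow> real) \<Rightarrow> real \<Rightarrow> real" where
  "noise_op \<xi> f = push_dens lebesgue I01 fold_pi (conv (rho \<xi>) (ext0 f))"

definition l1norm :: "(real \<Rightarrow> real) \<Rightarrow> real" where
  "l1norm f = (\<integral>x. \<bar>f x\<bar> \<partial>I01)"

definition V0 :: "(real \<Rightarrow> real) set" where
  "V0 = {\<nu>. integrable I01 \<nu> \<and> (\<integral>x. \<nu> x \<partial>I01) = 0}"

definition opnorm_V :: "((real \<Rightarrow> real) \<Rightarrow> (real \<Rightarrow> real)) \<Rightarrow> ereal" where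
  "opnorm_V A = (SUP \<nu>\<in>{\<nu>\<in>V0. l1norm \<nu> \<le> 1}. ereal (l1norm (A \<nu>)))"

definition mixing :: "(real \<Rightarrow> real) \<Rightarrow> real \<Rightarrow> bool" where
  "mixing T \<xi> \<longleftrightarrow> (\<forall>\<nu>\<in>V0.
     (\<lambda>n. l1norm (((noise_op \<xi> \<circ> transfer_op T) ^^ n) \<nu>)) \<longlonglongrightarrow> 0)"

end

theory Submission
  imports Defs
begin

lemma I01_finite: "finite_measure I01"
  by (rule finite_measure_lebesgue_on) simp

lemma push_part:
  fixes M :: "'a measure" and S and h :: "'a \<Rightarrow> real" and g :: "real \<Rightarrow> real"
  assumes S: "S \<in> measurable M I01"
  and ns0: "\<forall>A\<in>sets I01. emeasure I01 A = 0 \<longrightarrow> emeasure M (S -` A \<inter> space M) = 0"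
  and h: "integrable M h"
  and g: "g \<in> borel_measurable I01" and gb: "\<And>y. \<bar>g y\<bar> \<le> 1"
  shows "integrable I01 (\<lambda>y. enn2real (RN_deriv I01 (distr (density M (\<lambda>x. ennreal (h x))) I01 S) y) * g y)
     \<and> (\<integral>y. enn2real (RN_deriv I01 (distr (density M (\<lambda>x. ennreal (h x))) I01 S) y) * g y \<partial>I01)
        = (\<integral>x. max (h x) 0 * g (S x) \<partial>M)"
proof -
  have ns: "\<And>A. A \<in> sets I01 \<Longrightarrow> emeasure I01 A = 0 \<Longrightarrow> emeasure M (S -` A \<inter> space M) = 0"
    using ns0 by blast
  interpret F: finite_measure I01 by (rule I01_finite)
  define N where "N = distr (density M (\<lambda>x. ennreal (h x))) I01 S"
  have hm[measurable]: "h \<in> borel_measurable M" using h by auto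
  have S'[measurable]: "S \<in> measurable (density M (\<lambda>x. ennreal (h x))) I01" using S by simp
  have dens: "density M (\<lambda>x. ennreal (h x)) = density M (\<lambda>x. ennreal (max (h x) 0))"
    by (rule density_cong) (auto intro!: AE_I2 simp: max_def ennreal_neg)
  have hp: "integrable M (\<lambda>x. max (h x) 0)" using h by auto
  have fin: "finite_measure N"
  proof (rule finite_measureI)
    have "emeasure N (space N) = emeasure (density M (\<lambda>x. ennreal (max (h x) 0))) (space M)"
    proof -
      have "S -` {0..1} \<inter> space M = space M" using measurable_space[OF S] by auto
      then show ?thesis unfolding N_def dens using S by (subst emeasure_distr) auto
    qed
    also have "\<dots> = (\<integral>\<^sup>+x. ennreal (max (h x) 0) \<partial>M)"
      by (subst emeasure_density) (auto intro!: nn_integral_cong)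
    also have "\<dots> < \<infinity>" using hp by (simp add: nn_integral_eq_integral)
    finally show "emeasure N (space N) \<noteq> \<infinity>" by simp
  qed
  then interpret NF: finite_measure N .
  have setsN: "sets N = sets I01" unfolding N_def by simp
  have ac: "absolutely_continuous I01 N"
    unfolding absolutely_continuous_def
  proof
    fix A assume A: "A \<in> null_sets I01"
    then have "S -` A \<inter> space M \<in> null_sets M" using ns[of A] S
      using measurable_sets[OF S, of A] by (intro null_setsI) auto
    moreover have "absolutely_continuous M (density M (\<lambda>x. ennreal (h x)))"
      by (rule absolutely_continuousI_density) measurable
    ultimately have "S -` A \<inter> space M \<in> null_sets (density M (\<lambda>x. ennreal (h x)))" 
      unfolding absolutely_continuous_def by blast
    then have z: "emeasure (density M (\<lambda>x. ennreal (h x))) (S -` A \<inter> space M) = 0"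
      by (simp add: null_sets_def)
    have As: "A \<in> sets I01" using A by (simp add: null_sets_def)
    have "emeasure N A = emeasure (density M (\<lambda>x. ennreal (h x))) (S -` A \<inter> space M)"
      unfolding N_def using emeasure_distr[OF S' As] by simp
    then show "A \<in> null_sets N" using z As setsN by (intro null_setsI) auto
  qed
  have gm: "g \<in> borel_measurable N" unfolding measurable_cong_sets[OF setsN refl] by (rule g)
  have intg: "integrable N g"
    by (rule NF.integrable_const_bound[where B=1, OF AE_I2 gm]) (simp add: gb)
  have 1: "integrable I01 (\<lambda>y. enn2real (RN_deriv I01 N y) * g y)"
    using F.RN_deriv_integrable[OF NF.sigma_finite_measure_axioms ac setsN g] intg by blast
  have "(\<integral>y. enn2real (RN_deriv I01 N y) * g y \<partial>I01) = integral\<^sup>L N g"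
    by (rule F.RN_deriv_integral[OF NF.sigma_finite_measure_axioms ac setsN g, symmetric])
  also have "\<dots> = (\<integral>x. g (S x) \<partial>density M (\<lambda>x. ennreal (max (h x) 0)))"
  proof -
    have S2: "S \<in> measurable (density M (\<lambda>x. ennreal (max (h x) 0))) I01" using S by simp
    show ?thesis unfolding N_def dens by (rule integral_distr[OF S2 g])
  qed
  also have "\<dots> = (\<integral>x. max (h x) 0 * g (S x) \<partial>M)"
  proof -
    have m1: "(\<lambda>x. g (S x)) \<in> borel_measurable M" using g S by measurable
    have m2: "(\<lambda>x. max (h x) 0) \<in> borel_measurable M" by measurable
    have "AE x in M. 0 \<le> max (h x) 0" by simp
    from integral_density[OF m1 m2 this] show ?thesis by simp
  qed
  finally have 2: "(\<integral>y. enn2real (RN_deriv I01 N y) * g y \<partial>I01) = (\<integral>x. max (h x) 0 * g (S x) \<partial>M)" .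
  show ?thesis using 1 2 unfolding N_def by blast
qed

lemma ae_nonneg_from_sets:
  fixes u :: "real \<Rightarrow> real"
  assumes u: "integrable I01 u"
    and h: "\<And>A. A \<in> sets I01 \<Longrightarrow> 0 \<le> (\<integral>y. indicator A y * u y \<partial>I01)"
  shows "AE y in I01. 0 \<le> u y"
proof -
  define A where "A = {y \<in> space I01. u y < 0}"
  have um[measurable]: "u \<in> borel_measurable I01" using u by auto
  have As: "A \<in> sets I01" unfolding A_def by measurable
  have int: "integrable I01 (\<lambda>y. - (indicator A y * u y))"
    using integrable_mult_indicator[OF As u] by simp
  have nn: "AE y in I01. 0 \<le> - (indicator A y * u y)"
    by (auto simp: A_def indicator_def)
  have "(\<integral>y. - (indicator A y * u y) \<partial>I01) \<le> 0" using h[OF As] by simp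
  moreover have "0 \<le> (\<integral>y. - (indicator A y * u y) \<partial>I01)" using nn by (rule integral_nonneg_AE)
  ultimately have "(\<integral>y. - (indicator A y * u y) \<partial>I01) = 0" by linarith
  then have "AE y in I01. - (indicator A y * u y) = 0"
    using integral_nonneg_eq_0_iff_AE[OF int nn] by simp
  moreover have "AE y in I01. y \<in> space I01" by (rule AE_space)
  ultimately show ?thesis
    by eventually_elim (auto simp: A_def indicator_def split: if_splits)
qed

lemma ae_zero_from_sets:
  fixes u :: "real \<Rightarrow> real"
  assumes u: "integrable I01 u"
    and h: "\<And>A. A \<in> sets I01 \<Longrightarrow> (\<integral>y. indicator A y * u y \<partial>I01) = 0"
  shows "AE y in I01. u y = 0"
proof -
  have 1: "AE y in I01. 0 \<le> u y" using h by (intro ae_nonneg_from_sets[OF u]) auto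
  have 2: "AE y in I01. 0 \<le> - u y"
  proof (rule ae_nonneg_from_sets)
    show "integrable I01 (\<lambda>y. - u y)" using u by simp
    fix A assume "A \<in> sets I01"
    then show "0 \<le> (\<integral>y. indicator A y * - u y \<partial>I01)" using h[of A] by simp
  qed
  from 1 2 show ?thesis by eventually_elim auto
qed

lemma int_bdd:
  fixes f :: "'a \<Rightarrow> real"
  assumes "integrable M f" "h \<in> borel_measurable M" "\<And>x. \<bar>h x\<bar> \<le> 1"
  shows "integrable M (\<lambda>x. f x * h x)"
proof (rule Bochner_Integration.integrable_bound[OF assms(1)])
  show "(\<lambda>x. f x * h x) \<in> borel_measurable M" using assms by auto
  show "AE x in M. norm (f x * h x) \<le> norm (f x)"
    using assms(3) by (auto simp: abs_mult intro!: mult_left_le)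
qed

locale pushsys =
  fixes M :: "'a measure" and S :: "'a \<Rightarrow> real"
  assumes Smeas: "S \<in> measurable M I01"
    and nsing: "\<And>A. A \<in> sets I01 \<Longrightarrow> emeasure I01 A = 0 \<Longrightarrow> emeasure M (S -` A \<inter> space M) = 0"
begin

lemma char:
  assumes f: "integrable M f" and g: "g \<in> borel_measurable I01" and gb: "\<And>y. \<bar>g y\<bar> \<le> 1"
  shows "integrable I01 (\<lambda>y. push_dens M I01 S f y * g y)"
    and "(\<integral>y. push_dens M I01 S f y * g y \<partial>I01) = (\<integral>x. f x * g (S x) \<partial>M)"
    and "integrable M (\<lambda>x. f x * g (S x))"
proof -
  have ns0: "\<forall>A\<in>sets I01. emeasure I01 A = 0 \<longrightarrow> emeasure M (S -` A \<inter> space M) = 0"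
    using nsing by blast
  note P1 = push_part[OF Smeas ns0 f g gb]
  have mf: "integrable M (\<lambda>x. - f x)" using f by simp
  note P2 = push_part[OF Smeas ns0 mf g gb]
  have eq: "\<And>y. push_dens M I01 S f y * g y =
      enn2real (RN_deriv I01 (distr (density M (\<lambda>x. ennreal (f x))) I01 S) y) * g y
    - enn2real (RN_deriv I01 (distr (density M (\<lambda>x. ennreal (- f x))) I01 S) y) * g y"
    unfolding push_dens_def by (simp add: left_diff_distrib)
  show "integrable I01 (\<lambda>y. push_dens M I01 S f y * g y)"
    unfolding eq using P1 P2 by auto
  have gS: "(\<lambda>x. g (S x)) \<in> borel_measurable M" using g Smeas by measurable
  show 3: "integrable M (\<lambda>x. f x * g (S x))" using int_bdd[OF f gS] gb by auto
  have i1: "integrable M (\<lambda>x. max (f x) 0 * g (S x))"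
    using int_bdd[OF _ gS] gb f by auto
  have i2: "integrable M (\<lambda>x. max (- f x) 0 * g (S x))"
    using int_bdd[OF _ gS] gb f by auto
  have "(\<integral>y. push_dens M I01 S f y * g y \<partial>I01) =
     (\<integral>x. max (f x) 0 * g (S x) \<partial>M) - (\<integral>x. max (- f x) 0 * g (S x) \<partial>M)"
    unfolding eq using P1 P2 by (subst Bochner_Integration.integral_diff) auto
  also have "\<dots> = (\<integral>x. max (f x) 0 * g (S x) - max (- f x) 0 * g (S x) \<partial>M)"
    using i1 i2 by (subst Bochner_Integration.integral_diff) auto
  also have "\<dots> = (\<integral>x. f x * g (S x) \<partial>M)"
    by (rule Bochner_Integration.integral_cong) (auto simp: max_def algebra_simps)
  finally show "(\<integral>y. push_dens M I01 S f y * g y \<partial>I01) = (\<integral>x. f x * g (S x) \<partial>M)" .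
qed

lemma int_push: "integrable M f \<Longrightarrow> integrable I01 (push_dens M I01 S f)"
  using char(1)[of f "\<lambda>_. 1"] by simp

lemma integral_push: "integrable M f \<Longrightarrow> (\<integral>y. push_dens M I01 S f y \<partial>I01) = (\<integral>x. f x \<partial>M)"
  using char(2)[of f "\<lambda>_. 1"] by simp

lemma set_push:
  assumes "integrable M f" "A \<in> sets I01"
  shows "(\<integral>y. indicator A y * push_dens M I01 S f y \<partial>I01) = (\<integral>x. f x * indicator A (S x) \<partial>M)"
    "integrable M (\<lambda>x. f x * indicator A (S x))"
  using char[of f "indicator A"] assms by (auto simp: mult.commute)

lemma push_pos:
  assumes f: "integrable M f" and nn: "AE x in M. 0 \<le> f x"
  shows "AE y in I01. 0 \<le> push_dens M I01 S f y"
proof (rule ae_nonneg_from_sets[OF int_push[OF f]])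
  fix A assume A: "A \<in> sets I01"
  have "0 \<le> (\<integral>x. f x * indicator A (S x) \<partial>M)"
    using nn by (intro integral_nonneg_AE) (auto simp: indicator_def)
  then show "0 \<le> (\<integral>y. indicator A y * push_dens M I01 S f y \<partial>I01)" using set_push[OF f A] by simp
qed

lemma push_lin:
  assumes f: "integrable M f" and g: "integrable M g"
  shows "AE y in I01. push_dens M I01 S (\<lambda>x. a * f x + b * g x) y
            = a * push_dens M I01 S f y + b * push_dens M I01 S g y"
proof -
  have fg: "integrable M (\<lambda>x. a * f x + b * g x)" using f g by auto
  have "AE y in I01. push_dens M I01 S (\<lambda>x. a * f x + b * g x) y
            - (a * push_dens M I01 S f y + b * push_dens M I01 S g y) = 0"
  proof (rule ae_zero_from_sets)
    show "integrable I01 (\<lambda>y. push_dens M I01 S (\<lambda>x. a * f x + b * g x) y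
            - (a * push_dens M I01 S f y + b * push_dens M I01 S g y))"
      using int_push[OF fg] int_push[OF f] int_push[OF g] by auto
    fix A assume A: "A \<in> sets I01"
    have i1: "integrable I01 (\<lambda>y. indicator A y * push_dens M I01 S h y)" if "integrable M h" for h
      using integrable_mult_indicator[OF A int_push[OF that]] by simp
    have "(\<integral>y. indicator A y * (push_dens M I01 S (\<lambda>x. a * f x + b * g x) y
            - (a * push_dens M I01 S f y + b * push_dens M I01 S g y)) \<partial>I01)
        = (\<integral>y. indicator A y * push_dens M I01 S (\<lambda>x. a * f x + b * g x) y \<partial>I01)
          - a * (\<integral>y. indicator A y * push_dens M I01 S f y \<partial>I01)
          - b * (\<integral>y. indicator A y * push_dens M I01 S g y \<partial>I01)"
      using i1[OF fg] i1[OF f] i1[OF g] by (simp add: algebra_simps)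
    also have "\<dots> = (\<integral>x. (a * f x + b * g x) * indicator A (S x) \<partial>M)
          - a * (\<integral>x. f x * indicator A (S x) \<partial>M) - b * (\<integral>x. g x * indicator A (S x) \<partial>M)"
      using set_push[OF fg A] set_push[OF f A] set_push[OF g A] by simp
    also have "\<dots> = 0"
      using set_push(2)[OF f A] set_push(2)[OF g A] by (simp add: algebra_simps)
    finally show "(\<integral>y. indicator A y * (push_dens M I01 S (\<lambda>x. a * f x + b * g x) y
            - (a * push_dens M I01 S f y + b * push_dens M I01 S g y)) \<partial>I01) = 0" .
  qed
  then show ?thesis by eventually_elim simp
qed

lemma push_cong:
  assumes f: "f \<in> borel_measurable M" and g: "g \<in> borel_measurable M" and e: "AE x in M. f x = g x"
  shows "push_dens M I01 S f = push_dens M I01 S g"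
proof -
  have "density M (\<lambda>x. ennreal (f x)) = density M (\<lambda>x. ennreal (g x))"
    using f g e by (intro density_cong) auto
  moreover have "density M (\<lambda>x. ennreal (- f x)) = density M (\<lambda>x. ennreal (- g x))"
    using f g e by (intro density_cong) auto
  ultimately show ?thesis unfolding push_dens_def by simp
qed

end

definition good :: "((real \<Rightarrow> real) \<Rightarrow> (real \<Rightarrow> real)) \<Rightarrow> bool" where
  "good P \<longleftrightarrow>
    (\<forall>f. integrable I01 f \<longrightarrow> integrable I01 (P f)) \<and>
    (\<forall>f. integrable I01 f \<longrightarrow> (\<integral>x. P f x \<partial>I01) = (\<integral>x. f x \<partial>I01)) \<and>
    (\<forall>f. integrable I01 f \<longrightarrow> (AE x in I01. 0 \<le> f x) \<longrightarrow> (AE x in I01. 0 \<le> P f x)) \<and>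
    (\<forall>f g. integrable I01 f \<longrightarrow> integrable I01 g \<longrightarrow> (AE x in I01. f x = g x) \<longrightarrow> (AE x in I01. P f x = P g x)) \<and>
    (\<forall>f g a b. integrable I01 f \<longrightarrow> integrable I01 g \<longrightarrow>
       (AE x in I01. P (\<lambda>x. a * f x + b * g x) x = a * P f x + b * P g x))"

lemma goodD:
  assumes "good P"
  shows good_int: "integrable I01 f \<Longrightarrow> integrable I01 (P f)"
    and good_integral: "integrable I01 f \<Longrightarrow> (\<integral>x. P f x \<partial>I01) = (\<integral>x. f x \<partial>I01)"
    and good_pos: "integrable I01 f \<Longrightarrow> (AE x in I01. 0 \<le> f x) \<Longrightarrow> (AE x in I01. 0 \<le> P f x)"
    and good_cong: "integrable I01 f \<Longrightarrow> integrable I01 g \<Longrightarrow> (AE x in I01. f x = g x) \<Longrightarrow> (AE x in I01. P f x = P g x)"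
    and good_lin: "integrable I01 f \<Longrightarrow> integrable I01 g \<Longrightarrow>
       (AE x in I01. P (\<lambda>x. a * f x + b * g x) x = a * P f x + b * P g x)"
proof -
  note d = assms[unfolded good_def]
  note d1 = conjunct1[OF d] and d2 = conjunct1[OF conjunct2[OF d]]
    and d3 = conjunct1[OF conjunct2[OF conjunct2[OF d]]]
    and d4 = conjunct1[OF conjunct2[OF conjunct2[OF conjunct2[OF d]]]]
    and d5 = conjunct2[OF conjunct2[OF conjunct2[OF conjunct2[OF d]]]]
  show "integrable I01 f \<Longrightarrow> integrable I01 (P f)" using d1 by blast
  show "integrable I01 f \<Longrightarrow> (\<integral>x. P f x \<partial>I01) = (\<integral>x. f x \<partial>I01)" using d2 by blast
  show "integrable I01 f \<Longrightarrow> (AE x in I01. 0 \<le> f x) \<Longrightarrow> (AE x in I01. 0 \<le> P f x)" using d3 by blast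
  show "integrable I01 f \<Longrightarrow> integrable I01 g \<Longrightarrow> (AE x in I01. f x = g x) \<Longrightarrow> (AE x in I01. P f x = P g x)"
    using d4 by blast
  show "integrable I01 f \<Longrightarrow> integrable I01 g \<Longrightarrow>
       (AE x in I01. P (\<lambda>x. a * f x + b * g x) x = a * P f x + b * P g x)" using d5 by blast
qed

lemma good_id: "good id"
  unfolding good_def by auto

lemma good_comp:
  assumes P: "good P" and Q: "good Q"
  shows "good (P \<circ> Q)"
  unfolding good_def
proof (intro conjI allI impI)
  fix f :: "real \<Rightarrow> real" assume f: "integrable I01 f"
  show "integrable I01 ((P \<circ> Q) f)" using good_int[OF P good_int[OF Q f]] by simp
  show "(\<integral>x. (P \<circ> Q) f x \<partial>I01) = (\<integral>x. f x \<partial>I01)"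
    using good_integral[OF P good_int[OF Q f]] good_integral[OF Q f] by simp
  assume "AE x in I01. 0 \<le> f x"
  then show "AE x in I01. 0 \<le> (P \<circ> Q) f x"
    using good_pos[OF P good_int[OF Q f] good_pos[OF Q f]] by simp
next
  fix f g :: "real \<Rightarrow> real" assume f: "integrable I01 f" and g: "integrable I01 g" and e: "AE x in I01. f x = g x"
  have "AE x in I01. Q f x = Q g x" by (rule good_cong[OF Q f g e])
  then show "AE x in I01. (P \<circ> Q) f x = (P \<circ> Q) g x"
    using good_cong[OF P good_int[OF Q f] good_int[OF Q g]] by simp
next
  fix f g :: "real \<Rightarrow> real" and a b :: real assume f: "integrable I01 f" and g: "integrable I01 g"
  have fg: "integrable I01 (\<lambda>x. a * f x + b * g x)" using f g by auto
  have i1: "integrable I01 (\<lambda>x. a * Q f x + b * Q g x)"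
    using good_int[OF Q f] good_int[OF Q g] by auto
  have "AE x in I01. P (Q (\<lambda>x. a * f x + b * g x)) x = P (\<lambda>x. a * Q f x + b * Q g x) x"
    by (rule good_cong[OF P good_int[OF Q fg] i1 good_lin[OF Q f g]])
  then show "AE x in I01. (P \<circ> Q) (\<lambda>x. a * f x + b * g x) x = a * (P \<circ> Q) f x + b * (P \<circ> Q) g x"
    using good_lin[OF P good_int[OF Q f] good_int[OF Q g], of a b] by eventually_elim simp
qed

lemma good_pow: "good P \<Longrightarrow> good (P ^^ n)"
  by (induction n) (auto simp: good_id good_comp)

lemma good_scale:
  assumes "good P" "integrable I01 f"
  shows "AE x in I01. P (\<lambda>x. c * f x) x = c * P f x"
  using good_lin[OF assms(1,2,2), of c 0] by simp

lemma good_diff: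
  assumes "good P" "integrable I01 f" "integrable I01 g"
  shows "AE x in I01. P (\<lambda>x. f x - g x) x = P f x - P g x"
  using good_lin[OF assms, of 1 "-1"] by simp

lemma good_mono:
  assumes P: "good P" and f: "integrable I01 f" and g: "integrable I01 g"
    and le: "AE x in I01. f x \<le> g x"
  shows "AE x in I01. P f x \<le> P g x"
proof -
  have "AE x in I01. 0 \<le> P (\<lambda>x. g x - f x) x"
    using le by (intro good_pos[OF P]) (use f g in auto)
  with good_diff[OF P g f] show ?thesis by eventually_elim auto
qed

lemma posneg:
  fixes \<nu> :: "real \<Rightarrow> real"
  shows "\<nu> = (\<lambda>x. max (\<nu> x) 0 - max (- \<nu> x) 0)"
  by (auto simp: max_def)

lemma good_split:
  assumes P: "good P" and f: "integrable I01 f"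
  shows "AE x in I01. P f x = P (\<lambda>x. max (f x) 0) x - P (\<lambda>x. max (- f x) 0) x"
proof -
  have "P f = P (\<lambda>x. max (f x) 0 - max (- f x) 0)" by (subst posneg[of f]) simp
  then show ?thesis using good_diff[OF P, of "\<lambda>x. max (f x) 0" "\<lambda>x. max (- f x) 0"] f by auto
qed

lemma int_abs_split:
  fixes f :: "real \<Rightarrow> real"
  assumes f: "integrable I01 f"
  shows "(\<integral>x. \<bar>f x\<bar> \<partial>I01) = (\<integral>x. max (f x) 0 \<partial>I01) + (\<integral>x. max (- f x) 0 \<partial>I01)"
proof -
  have "(\<integral>x. \<bar>f x\<bar> \<partial>I01) = (\<integral>x. max (f x) 0 + max (- f x) 0 \<partial>I01)"
    by (rule Bochner_Integration.integral_cong) (auto simp: max_def split: abs_split)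
  also have "\<dots> = (\<integral>x. max (f x) 0 \<partial>I01) + (\<integral>x. max (- f x) 0 \<partial>I01)"
    using f by (intro Bochner_Integration.integral_add) auto
  finally show ?thesis .
qed

lemma good_abs:
  assumes P: "good P" and f: "integrable I01 f"
  shows "(\<integral>x. \<bar>P f x\<bar> \<partial>I01) \<le> (\<integral>x. \<bar>f x\<bar> \<partial>I01)"
proof -
  have fp: "integrable I01 (\<lambda>x. max (f x) 0)" and fm: "integrable I01 (\<lambda>x. max (- f x) 0)"
    using f by auto
  have pp: "AE x in I01. 0 \<le> P (\<lambda>x. max (f x) 0) x"
    by (rule good_pos[OF P fp]) auto
  have pm: "AE x in I01. 0 \<le> P (\<lambda>x. max (- f x) 0) x"
    by (rule good_pos[OF P fm]) auto
  have "(\<integral>x. \<bar>P f x\<bar> \<partial>I01) \<le> (\<integral>x. P (\<lambda>x. max (f x) 0) x + P (\<lambda>x. max (- f x) 0) x \<partial>I01)"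
  proof (rule integral_mono_AE)
    show "integrable I01 (\<lambda>x. \<bar>P f x\<bar>)" using good_int[OF P f] by auto
    show "integrable I01 (\<lambda>x. P (\<lambda>x. max (f x) 0) x + P (\<lambda>x. max (- f x) 0) x)"
      using good_int[OF P fp] good_int[OF P fm] by auto
    show "AE x in I01. \<bar>P f x\<bar> \<le> P (\<lambda>x. max (f x) 0) x + P (\<lambda>x. max (- f x) 0) x"
      using good_split[OF P f] pp pm by eventually_elim auto
  qed
  also have "\<dots> = (\<integral>x. max (f x) 0 \<partial>I01) + (\<integral>x. max (- f x) 0 \<partial>I01)"
    using good_int[OF P fp] good_int[OF P fm] good_integral[OF P fp] good_integral[OF P fm]
    by (subst Bochner_Integration.integral_add) auto
  also have "\<dots> = (\<integral>x. \<bar>f x\<bar> \<partial>I01)" using int_abs_split[OF f] by simp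
  finally show ?thesis .
qed

lemma good_pow_dom:
  assumes A: "good A" and B: "good B" and c: "0 \<le> c"
    and comp: "\<And>f. integrable I01 f \<Longrightarrow> (AE x in I01. 0 \<le> f x) \<Longrightarrow> (AE x in I01. c * B f x \<le> A f x)"
    and f: "integrable I01 f" and fn: "AE x in I01. 0 \<le> f x"
  shows "AE x in I01. c ^ n * (B ^^ n) f x \<le> (A ^^ n) f x"
proof (induction n)
  case 0 then show ?case by simp
next
  case (Suc n)
  define g where "g = (B ^^ n) f"
  define h where "h = (A ^^ n) f"
  have g: "integrable I01 g" unfolding g_def by (rule good_int[OF good_pow[OF B] f])
  have h: "integrable I01 h" unfolding h_def by (rule good_int[OF good_pow[OF A] f])
  have gn: "AE x in I01. 0 \<le> g x" unfolding g_def by (rule good_pos[OF good_pow[OF B] f fn])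
  have cg: "integrable I01 (\<lambda>x. c ^ n * g x)" using g by auto
  have 1: "AE x in I01. A (\<lambda>x. c ^ n * g x) x \<le> A h x"
    by (rule good_mono[OF A cg h]) (use Suc.IH in \<open>simp add: g_def h_def\<close>)
  have 2: "AE x in I01. A (\<lambda>x. c ^ n * g x) x = c ^ n * A g x" by (rule good_scale[OF A g])
  have 3: "AE x in I01. c * B g x \<le> A g x" by (rule comp[OF g gn])
  from 1 2 3 have "AE x in I01. c ^ Suc n * B g x \<le> A h x"
  proof eventually_elim
    case (elim x)
    have "c ^ Suc n * B g x = c ^ n * (c * B g x)" by simp
    also have "\<dots> \<le> c ^ n * A g x" using elim(3) c by (intro mult_left_mono) auto
    finally show ?case using elim(1,2) by simp
  qed
  then show ?case by (simp add: g_def h_def)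
qed

lemma main_bound:
  assumes A: "good A" and B: "good B" and c: "0 \<le> c"
    and comp: "\<And>f. integrable I01 f \<Longrightarrow> (AE x in I01. 0 \<le> f x) \<Longrightarrow> (AE x in I01. c * B f x \<le> A f x)"
    and nu: "integrable I01 \<nu>"
  shows "(\<integral>x. \<bar>(A ^^ n) \<nu> x\<bar> \<partial>I01) \<le> c ^ n * (\<integral>x. \<bar>(B ^^ n) \<nu> x\<bar> \<partial>I01) + (1 - c ^ n) * (\<integral>x. \<bar>\<nu> x\<bar> \<partial>I01)"
proof -
  define p where "p = (\<lambda>x. max (\<nu> x) 0)"
  define m where "m = (\<lambda>x. max (- \<nu> x) 0)"
  have p: "integrable I01 p" and m: "integrable I01 m" using nu by (auto simp: p_def m_def)
  have pn: "AE x in I01. 0 \<le> p x" and mn: "AE x in I01. 0 \<le> m x" by (auto simp: p_def m_def)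
  note An = good_pow[OF A, of n] and Bn = good_pow[OF B, of n]
  have e1: "AE x in I01. (A ^^ n) \<nu> x = (A ^^ n) p x - (A ^^ n) m x"
    using good_split[OF An nu] unfolding p_def m_def .
  have d1: "AE x in I01. c ^ n * (B ^^ n) p x \<le> (A ^^ n) p x"
    by (rule good_pow_dom[OF A B c comp p pn])
  have d2: "AE x in I01. c ^ n * (B ^^ n) m x \<le> (A ^^ n) m x"
    by (rule good_pow_dom[OF A B c comp m mn])
  have e2: "AE x in I01. (B ^^ n) \<nu> x = (B ^^ n) p x - (B ^^ n) m x"
    using good_split[OF Bn nu] unfolding p_def m_def .
  note iA = good_int[OF An] and iB = good_int[OF Bn]
  have "(\<integral>x. \<bar>(A ^^ n) \<nu> x\<bar> \<partial>I01) \<le> (\<integral>x. ((A ^^ n) p x - c ^ n * (B ^^ n) p x) + ((A ^^ n) m x - c ^ n * (B ^^ n) m x) + c ^ n * \<bar>(B ^^ n) \<nu> x\<bar> \<partial>I01)"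
  proof (rule integral_mono_AE)
    show "integrable I01 (\<lambda>x. \<bar>(A ^^ n) \<nu> x\<bar>)" using iA[OF nu] by auto
    show "integrable I01 (\<lambda>x. ((A ^^ n) p x - c ^ n * (B ^^ n) p x) + ((A ^^ n) m x - c ^ n * (B ^^ n) m x) + c ^ n * \<bar>(B ^^ n) \<nu> x\<bar>)"
      using iA[OF p] iA[OF m] iB[OF p] iB[OF m] iB[OF nu] by auto
    from e1 e2 d1 d2 show "AE x in I01. \<bar>(A ^^ n) \<nu> x\<bar> \<le> ((A ^^ n) p x - c ^ n * (B ^^ n) p x) + ((A ^^ n) m x - c ^ n * (B ^^ n) m x) + c ^ n * \<bar>(B ^^ n) \<nu> x\<bar>"
    proof eventually_elim
      case (elim x)
      have "\<bar>(A ^^ n) \<nu> x\<bar> = \<bar>((A ^^ n) p x - c ^ n * (B ^^ n) p x) - ((A ^^ n) m x - c ^ n * (B ^^ n) m x) + c ^ n * (B ^^ n) \<nu> x\<bar>"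
      proof -
        have "c ^ n * (B ^^ n) \<nu> x = c ^ n * (B ^^ n) p x - c ^ n * (B ^^ n) m x"
          using elim(2) by (simp add: right_diff_distrib)
        then show ?thesis using elim(1) by (intro arg_cong[where f=abs]) linarith
      qed
      also have "\<dots> \<le> \<bar>(A ^^ n) p x - c ^ n * (B ^^ n) p x\<bar> + \<bar>(A ^^ n) m x - c ^ n * (B ^^ n) m x\<bar> + \<bar>c ^ n * (B ^^ n) \<nu> x\<bar>"
        by linarith
      also have "\<dots> = ((A ^^ n) p x - c ^ n * (B ^^ n) p x) + ((A ^^ n) m x - c ^ n * (B ^^ n) m x) + c ^ n * \<bar>(B ^^ n) \<nu> x\<bar>"
        using elim(3,4) c by (simp add: abs_mult)
      finally show ?case .
    qed
  qed
  also have "\<dots> = ((\<integral>x. p x \<partial>I01) - c ^ n * (\<integral>x. p x \<partial>I01)) + ((\<integral>x. m x \<partial>I01) - c ^ n * (\<integral>x. m x \<partial>I01)) + c ^ n * (\<integral>x. \<bar>(B ^^ n) \<nu> x\<bar> \<partial>I01)"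
    using iA[OF p] iA[OF m] iB[OF p] iB[OF m] iB[OF nu]
      good_integral[OF An p] good_integral[OF An m] good_integral[OF Bn p] good_integral[OF Bn m]
    by (simp add: Bochner_Integration.integral_add Bochner_Integration.integral_diff)
  also have "\<dots> = c ^ n * (\<integral>x. \<bar>(B ^^ n) \<nu> x\<bar> \<partial>I01) + (1 - c ^ n) * (\<integral>x. \<bar>\<nu> x\<bar> \<partial>I01)"
    using int_abs_split[OF nu] unfolding p_def m_def by (simp add: algebra_simps)
  finally show ?thesis .
qed

lemma l1norm_nonneg: "0 \<le> l1norm f"
  unfolding l1norm_def by (rule integral_nonneg_AE) auto

lemma zero_in_S: "(\<lambda>_. 0) \<in> {\<nu>\<in>V0. l1norm \<nu> \<le> 1}"
  by (auto simp: V0_def l1norm_def)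

lemma good_V0:
  assumes "good P" "\<nu> \<in> V0" shows "P \<nu> \<in> V0"
proof -
  have i: "integrable I01 \<nu>" and z: "(\<integral>x. \<nu> x \<partial>I01) = 0" using assms(2) by (auto simp: V0_def)
  show ?thesis using good_int[OF assms(1) i] good_integral[OF assms(1) i] z by (simp add: V0_def)
qed

lemma good_l1:
  assumes "good P" "\<nu> \<in> V0" shows "l1norm (P \<nu>) \<le> l1norm \<nu>"
proof -
  have i: "integrable I01 \<nu>" using assms(2) by (auto simp: V0_def)
  show ?thesis unfolding l1norm_def by (rule good_abs[OF assms(1) i])
qed

lemma scaling:
  assumes P: "good P" and s: "0 \<le> s" and b: "\<And>\<nu>. \<nu> \<in> {\<nu>\<in>V0. l1norm \<nu> \<le> 1} \<Longrightarrow> l1norm (P \<nu>) \<le> s"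
    and mu: "\<mu> \<in> V0"
  shows "l1norm (P \<mu>) \<le> s * l1norm \<mu>"
proof (cases "l1norm \<mu> = 0")
  case True
  then show ?thesis using good_l1[OF P mu] l1norm_nonneg[of "P \<mu>"] by simp
next
  case False
  define t where "t = l1norm \<mu>"
  have t: "0 < t" using False l1norm_nonneg[of \<mu>] unfolding t_def by linarith
  have mi: "integrable I01 \<mu>" and m0: "(\<integral>x. \<mu> x \<partial>I01) = 0" using mu by (auto simp: V0_def)
  define \<mu>' where "\<mu>' = (\<lambda>x. (1 / t) * \<mu> x)"
  have mi': "integrable I01 \<mu>'" using mi by (auto simp: \<mu>'_def)
  have "l1norm \<mu>' = (1 / t) * t"
    unfolding l1norm_def \<mu>'_def t_def using t by (simp add: abs_mult l1norm_def)
  then have "\<mu>' \<in> {\<nu>\<in>V0. l1norm \<nu> \<le> 1}" using t mi' m0 by (auto simp: V0_def \<mu>'_def)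
  then have 1: "l1norm (P \<mu>') \<le> s" by (rule b)
  have "AE x in I01. P \<mu>' x = (1 / t) * P \<mu> x" unfolding \<mu>'_def by (rule good_scale[OF P mi])
  then have "l1norm (P \<mu>') = (\<integral>x. (1 / t) * \<bar>P \<mu> x\<bar> \<partial>I01)"
    unfolding l1norm_def using good_int[OF P mi] good_int[OF P mi'] t
    by (intro integral_cong_AE) (auto simp: abs_mult)
  also have "\<dots> = (1 / t) * l1norm (P \<mu>)" by (simp add: l1norm_def)
  finally have "(1 / t) * l1norm (P \<mu>) \<le> s" using 1 by simp
  then show ?thesis using t unfolding t_def by (simp add: field_simps)
qed

lemma abstract_final:
  assumes A: "good A" and B: "good B" and c: "0 < c" "c \<le> 1"
    and comp: "\<And>f. integrable I01 f \<Longrightarrow> (AE x in I01. 0 \<le> f x) \<Longrightarrow> (AE x in I01. c * B f x \<le> A f x)"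
    and hyp: "opnorm_V (B ^^ i) < 1"
  shows "opnorm_V (A ^^ i) < 1 \<and> (\<forall>\<nu>\<in>V0. (\<lambda>n. l1norm ((A ^^ n) \<nu>)) \<longlonglongrightarrow> 0)"
proof -
  let ?S = "{\<nu>\<in>V0. l1norm \<nu> \<le> 1}"
  have ge: "ereal (l1norm ((B ^^ i) (\<lambda>_. 0))) \<le> opnorm_V (B ^^ i)"
    unfolding opnorm_V_def by (rule SUP_upper[OF zero_in_S])
  moreover have "ereal 0 \<le> ereal (l1norm ((B ^^ i) (\<lambda>_. 0)))" using l1norm_nonneg by simp
  ultimately have "0 \<le> opnorm_V (B ^^ i)" using order_trans zero_ereal_def by metis
  then obtain r where r: "opnorm_V (B ^^ i) = ereal r" "0 \<le> r" "r < 1"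
    using hyp by (cases "opnorm_V (B ^^ i)") auto
  have rB: "l1norm ((B ^^ i) \<nu>) \<le> r" if "\<nu> \<in> ?S" for \<nu>
  proof -
    have "ereal (l1norm ((B ^^ i) \<nu>)) \<le> opnorm_V (B ^^ i)"
      unfolding opnorm_V_def by (rule SUP_upper[OF that])
    then show ?thesis using r by simp
  qed
  define s where "s = c ^ i * r + (1 - c ^ i)"
  have ci: "0 < c ^ i" "c ^ i \<le> 1" using c by (auto simp: power_le_one)
  have s1: "s < 1" unfolding s_def using ci r by (simp add: algebra_simps mult_strict_left_mono)
  have s0: "0 \<le> s" unfolding s_def using ci r by auto
  have sA: "l1norm ((A ^^ i) \<nu>) \<le> s" if "\<nu> \<in> ?S" for \<nu>
  proof -
    have nu: "integrable I01 \<nu>" using that by (auto simp: V0_def)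
    have "l1norm ((A ^^ i) \<nu>) \<le> c ^ i * l1norm ((B ^^ i) \<nu>) + (1 - c ^ i) * l1norm \<nu>"
      using main_bound[OF A B _ comp nu, of i] c unfolding l1norm_def by simp
    also have "\<dots> \<le> c ^ i * r + (1 - c ^ i) * 1"
      using rB[OF that] that ci by (intro add_mono mult_left_mono) auto
    finally show ?thesis unfolding s_def by simp
  qed
  have part1: "opnorm_V (A ^^ i) < 1"
  proof -
    have "opnorm_V (A ^^ i) \<le> ereal s"
      unfolding opnorm_V_def by (rule SUP_least) (use sA in auto)
    also have "\<dots> < 1" using s1 by simp
    finally show ?thesis .
  qed
  have scal: "l1norm ((A ^^ i) \<mu>) \<le> s * l1norm \<mu>" if "\<mu> \<in> V0" for \<mu>
    by (rule scaling[OF good_pow[OF A] s0 sA that])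
  have pow: "l1norm (((A ^^ i) ^^ k) \<nu>) \<le> s ^ k * l1norm \<nu>" if "\<nu> \<in> V0" for k \<nu>
  proof (induction k)
    case 0 then show ?case by simp
  next
    case (Suc k)
    have V: "((A ^^ i) ^^ k) \<nu> \<in> V0" by (rule good_V0[OF good_pow[OF good_pow[OF A]] that])
    have "l1norm (((A ^^ i) ^^ Suc k) \<nu>) \<le> s * l1norm (((A ^^ i) ^^ k) \<nu>)"
      using scal[OF V] by simp
    also have "\<dots> \<le> s * (s ^ k * l1norm \<nu>)" using Suc.IH s0 by (rule mult_left_mono)
    finally show ?case by simp
  qed
  have bound: "l1norm ((A ^^ n) \<nu>) \<le> s ^ (n div i) * l1norm \<nu>" if "\<nu> \<in> V0" for n \<nu>
  proof -
    have eq: "(A ^^ n) \<nu> = (A ^^ (n mod i)) (((A ^^ i) ^^ (n div i)) \<nu>)"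
    proof -
      have "A ^^ n = A ^^ (n mod i + i * (n div i))" by (simp add: mod_mult_div_eq)
      then have "A ^^ n = A ^^ (n mod i) \<circ> A ^^ (i * (n div i))" by (simp only: funpow_add)
      then show ?thesis by (simp add: funpow_mult)
    qed
    have V: "((A ^^ i) ^^ (n div i)) \<nu> \<in> V0" by (rule good_V0[OF good_pow[OF good_pow[OF A]] that])
    show ?thesis unfolding eq using good_l1[OF good_pow[OF A] V] pow[OF that] by (rule order_trans)
  qed
  have part2: "(\<lambda>n. l1norm ((A ^^ n) \<nu>)) \<longlonglongrightarrow> 0" if nu: "\<nu> \<in> V0" for \<nu>
  proof (cases "i = 0")
    case True
    have "l1norm \<nu> \<le> s * l1norm \<nu>" using scal[OF nu] True by simp
    then have z: "l1norm \<nu> = 0" using s1 l1norm_nonneg[of \<nu>]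
    proof -
      have "(1 - s) * l1norm \<nu> \<le> 0" using \<open>l1norm \<nu> \<le> s * l1norm \<nu>\<close> by (simp add: algebra_simps)
      moreover have "0 < 1 - s" using s1 by simp
      ultimately have "l1norm \<nu> \<le> 0" by (simp add: mult_le_0_iff)
      then show ?thesis using l1norm_nonneg[of \<nu>] by simp
    qed
    have "l1norm ((A ^^ n) \<nu>) = 0" for n
      using good_l1[OF good_pow[OF A] nu, of n] l1norm_nonneg[of "(A ^^ n) \<nu>"] z by simp
    then show ?thesis by simp
  next
    case False
    have lim1: "(\<lambda>k. s ^ k) \<longlonglongrightarrow> 0" using s0 s1 by (intro LIMSEQ_power_zero) auto
    have fl: "filterlim (\<lambda>n. n div i) at_top sequentially"
      unfolding filterlim_at_top eventually_sequentially
    proof (intro allI exI impI allI)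
      fix Z n :: nat assume "Z * i \<le> n"
      then have "Z * i div i \<le> n div i" by (rule div_le_mono)
      then show "Z \<le> n div i" using False by simp
    qed
    have "(\<lambda>n. s ^ (n div i) * l1norm \<nu>) \<longlonglongrightarrow> 0 * l1norm \<nu>"
      by (intro tendsto_mult tendsto_const filterlim_compose[OF lim1 fl])
    then have lim2: "(\<lambda>n. s ^ (n div i) * l1norm \<nu>) \<longlonglongrightarrow> 0" by simp
    show ?thesis
      by (rule tendsto_sandwich[OF _ _ tendsto_const lim2])
         (intro always_eventually allI l1norm_nonneg bound[OF nu])+
  qed
  show ?thesis using part1 part2 by blast
qed

lemma rho_borel[measurable]: "rho \<xi> \<in> borel_measurable borel"
  unfolding rho_def by measurable

lemma rho_shift: "rho \<xi> (y - x) = (1 / \<xi>) * indicator {y - \<xi>/2 .. y + \<xi>/2} x"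
  unfolding rho_def by (auto simp: indicator_def)

lemma rho_shift': "rho \<xi> (y - x) = (1 / \<xi>) * indicator {x - \<xi>/2 .. x + \<xi>/2} y"
  unfolding rho_def by (auto simp: indicator_def)

lemma ext0_int:
  assumes "integrable I01 f"
  shows "integrable lebesgue (ext0 f)" "(\<integral>x. ext0 f x \<partial>lebesgue) = (\<integral>x. f x \<partial>I01)"
proof -
  have e: "ext0 f = (\<lambda>x. indicator {0..1} x *\<^sub>R f x)" by (auto simp: ext0_def fun_eq_iff)
  show "integrable lebesgue (ext0 f)" unfolding e
    using assms integrable_restrict_space[of "{0..1::real}" lebesgue f] by simp
  show "(\<integral>x. ext0 f x \<partial>lebesgue) = (\<integral>x. f x \<partial>I01)" unfolding e
    using integral_restrict_space[of "{0..1::real}" lebesgue f] by simp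
qed

lemma conv_integrand:
  assumes h: "integrable lebesgue h"
  shows "integrable lebesgue (\<lambda>x. rho \<xi> (y - x) * h x)"
proof -
  have "integrable lebesgue (\<lambda>x. (1 / \<xi>) * (indicator {y - \<xi>/2 .. y + \<xi>/2} x *\<^sub>R h x))"
    using integrable_mult_indicator[OF _ h, of "{y - \<xi>/2 .. y + \<xi>/2}"] by auto
  then show ?thesis by (simp add: rho_shift mult.assoc)
qed

lemma conv_main:
  assumes \<xi>: "0 < \<xi>" and f: "integrable I01 f"
  shows "integrable lebesgue (conv (rho \<xi>) (ext0 f))"
    and "(\<integral>y. conv (rho \<xi>) (ext0 f) y \<partial>lebesgue) = (\<integral>x. f x \<partial>I01)"
proof -
  define h where "h = ext0 f"
  have h: "integrable lebesgue h" unfolding h_def by (rule ext0_int[OF f])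
  have hm: "h \<in> borel_measurable (completion lborel)" using h by auto
  obtain h' where h'm[measurable]: "h' \<in> borel_measurable lborel" and ae: "AE x in lborel. h x = h' x"
    using completion_ex_borel_measurable_real[OF hm] by blast
  have ae': "AE x in lebesgue. h x = h' x" using AE_completion[OF ae] .
  have h'leb: "h' \<in> borel_measurable lebesgue" by (rule measurable_completion[OF h'm])
  have h'L: "integrable lebesgue h'" by (rule integrable_cong_AE_imp[OF h h'leb ae'])
  have h'i: "integrable lborel h'" using h'L integrable_completion[of h' lborel] by simp
  define F where "F = (\<lambda>y x. rho \<xi> (y - x) * h' x)"
  have Fm[measurable]: "case_prod F \<in> borel_measurable (lborel \<Otimes>\<^sub>M lborel)"
    unfolding F_def by measurable
  have convF: "conv (rho \<xi>) h y = (\<integral>x. F y x \<partial>lborel)" for y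
  proof -
    have "conv (rho \<xi>) h y = (\<integral>x. rho \<xi> (y - x) * h' x \<partial>lebesgue)"
      unfolding conv_def using ae' borel_measurable_integrable[OF conv_integrand[OF h, of \<xi> y]]
        borel_measurable_integrable[OF conv_integrand[OF h'L, of \<xi> y]]
      by (intro integral_cong_AE) auto
    also have "\<dots> = (\<integral>x. F y x \<partial>lborel)" unfolding F_def
      by (rule integral_completion) measurable
    finally show ?thesis .
  qed
  have inner: "(\<integral>\<^sup>+y. ennreal (norm (F y x)) \<partial>lborel) = ennreal (norm (h' x))" for x
  proof -
    have "(\<integral>\<^sup>+y. ennreal (norm (F y x)) \<partial>lborel)
        = (\<integral>\<^sup>+y. ennreal (\<bar>h' x\<bar> / \<xi>) * indicator {x - \<xi>/2 .. x + \<xi>/2} y \<partial>lborel)"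
      unfolding F_def rho_shift'[of \<xi>] using \<xi>
      by (intro nn_integral_cong) (auto simp: indicator_def abs_mult)
    also have "\<dots> = ennreal (\<bar>h' x\<bar> / \<xi>) * ennreal \<xi>"
      using \<xi> by (subst nn_integral_cmult_indicator) auto
    also have "\<dots> = ennreal (norm (h' x))"
      using \<xi> by (simp add: ennreal_mult[symmetric])
    finally show ?thesis .
  qed
  have Fint: "integrable (lborel \<Otimes>\<^sub>M lborel) (case_prod F)"
  proof (subst integrable_iff_bounded, intro conjI)
    show "case_prod F \<in> borel_measurable (lborel \<Otimes>\<^sub>M lborel)" by (rule Fm)
    have "(\<integral>\<^sup>+p. ennreal (norm (case_prod F p)) \<partial>(lborel \<Otimes>\<^sub>M lborel))
        = (\<integral>\<^sup>+x. (\<integral>\<^sup>+y. ennreal (norm (F y x)) \<partial>lborel) \<partial>lborel)"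
      by (subst lborel_pair.nn_integral_snd[symmetric]) (auto simp: case_prod_beta)
    also have "\<dots> = (\<integral>\<^sup>+x. ennreal (norm (h' x)) \<partial>lborel)" by (intro nn_integral_cong inner)
    also have "\<dots> < \<infinity>" using h'i by (simp add: integrable_iff_bounded)
    finally show "(\<integral>\<^sup>+p. ennreal (norm (case_prod F p)) \<partial>(lborel \<Otimes>\<^sub>M lborel)) < \<infinity>" .
  qed
  have cF: "conv (rho \<xi>) h = (\<lambda>y. \<integral>x. F y x \<partial>lborel)" using convF by auto
  have i1: "integrable lborel (\<lambda>y. \<integral>x. F y x \<partial>lborel)"
    using lborel_pair.integrable_fst'[OF Fint] by simp
  have m1: "(\<lambda>y. \<integral>x. F y x \<partial>lborel) \<in> borel_measurable lborel" using i1 by auto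
  show "integrable lebesgue (conv (rho \<xi>) (ext0 f))"
    unfolding h_def[symmetric] cF using i1 integrable_completion[OF m1] by simp
  have innerI: "(\<integral>y. F y x \<partial>lborel) = h' x" for x
  proof -
    have "(\<integral>y. F y x \<partial>lborel) = (\<integral>y. (h' x / \<xi>) * indicator {x - \<xi>/2 .. x + \<xi>/2} y \<partial>lborel)"
      unfolding F_def rho_shift'[of \<xi>] by (intro Bochner_Integration.integral_cong) auto
    also have "\<dots> = (h' x / \<xi>) * measure lborel {x - \<xi>/2 .. x + \<xi>/2}" by simp
    also have "\<dots> = h' x" using \<xi> by (simp add: measure_def)
    finally show ?thesis .
  qed
  have "(\<integral>y. conv (rho \<xi>) (ext0 f) y \<partial>lebesgue) = (\<integral>y. (\<integral>x. F y x \<partial>lborel) \<partial>lborel)"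
    unfolding h_def[symmetric] cF by (rule integral_completion[OF m1])
  also have "\<dots> = (\<integral>x. (\<integral>y. F y x \<partial>lborel) \<partial>lborel)"
    by (rule lborel_pair.Fubini_integral[OF Fint, symmetric])
  also have "\<dots> = (\<integral>x. h' x \<partial>lborel)" by (simp add: innerI)
  also have "\<dots> = (\<integral>x. h' x \<partial>lebesgue)" by (rule integral_completion[symmetric]) simp
  also have "\<dots> = (\<integral>x. h x \<partial>lebesgue)" using ae' by (intro integral_cong_AE) (use h h'L in auto)
  also have "\<dots> = (\<integral>x. f x \<partial>I01)" unfolding h_def by (rule ext0_int[OF f])
  finally show "(\<integral>y. conv (rho \<xi>) (ext0 f) y \<partial>lebesgue) = (\<integral>x. f x \<partial>I01)" .
qed

lemma fold_formula: "fold_pi x = \<bar>x - 2 * of_int (round (x / 2))\<bar>"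
  unfolding fold_pi_def
proof (rule cInf_eq_minimum)
  show "\<bar>x - 2 * of_int (round (x / 2))\<bar> \<in> range (\<lambda>i::int. \<bar>x - 2 * of_int i\<bar>)" by auto
  fix y assume "y \<in> range (\<lambda>i::int. \<bar>x - 2 * of_int i\<bar>)"
  then obtain i :: int where y: "y = \<bar>x - 2 * of_int i\<bar>" by auto
  have "\<bar>x / 2 - of_int (round (x / 2))\<bar> \<le> \<bar>x / 2 - of_int i\<bar>" by (rule round_diff_minimal)
  then show "\<bar>x - 2 * of_int (round (x / 2))\<bar> \<le> y" unfolding y by linarith
qed

lemma fold_range: "fold_pi x \<in> {0..1}"
proof -
  have "x / 2 - 1/2 \<le> of_int (round (x / 2))" by (rule of_int_round_ge)
  moreover have "of_int (round (x / 2)) \<le> x / 2 + 1/2" by (rule of_int_round_le)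
  ultimately show ?thesis unfolding fold_formula by auto
qed

lemma fold_borel[measurable]: "fold_pi \<in> borel_measurable borel"
proof -
  have "fold_pi = (\<lambda>x. \<bar>x - 2 * real_of_int \<lfloor>x / 2 + 1/2\<rfloor>\<bar>)"
    by (auto simp: fun_eq_iff fold_formula round_def)
  also have "\<dots> \<in> borel_measurable borel" by measurable
  finally show ?thesis .
qed

lemma fold_neg:
  assumes C: "negligible C"
  shows "negligible (fold_pi -` C)"
proof -
  let ?F = "range (\<lambda>i::int. (\<lambda>a. a + 2 * of_int i) ` C \<union> (\<lambda>a. 2 * of_int i - a) ` C)"
  have sub: "fold_pi -` C \<subseteq> \<Union>?F"
  proof
    fix x assume "x \<in> fold_pi -` C"
    then have a: "\<bar>x - 2 * of_int (round (x / 2))\<bar> \<in> C" by (simp add: fold_formula)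
    define i where "i = round (x / 2)"
    have "x \<in> (\<lambda>a. a + 2 * of_int i) ` C \<union> (\<lambda>a. 2 * of_int i - a) ` C"
    proof (cases "0 \<le> x - 2 * of_int i")
      case True
      then have "x = \<bar>x - 2 * of_int i\<bar> + 2 * of_int i" by simp
      then show ?thesis using a unfolding i_def by (metis UnI1 image_eqI)
    next
      case False
      then have "x = 2 * of_int i - \<bar>x - 2 * of_int i\<bar>" by simp
      then show ?thesis using a unfolding i_def by (metis UnI2 image_eqI)
    qed
    then show "x \<in> \<Union>?F" by blast
  qed
  have "negligible (\<Union>?F)"
  proof (rule negligible_countable_Union)
    show "countable ?F" by simp
    fix S assume "S \<in> ?F"
    then obtain i :: int where S: "S = (\<lambda>a. a + 2 * of_int i) ` C \<union> (\<lambda>a. 2 * of_int i - a) ` C" by auto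
    have 1: "negligible ((\<lambda>a. a + 2 * of_int i) ` C)"
      by (rule negligible_differentiable_image_negligible[OF _ C]) (auto intro!: derivative_intros)
    have 2: "negligible ((\<lambda>a. 2 * of_int i - a) ` C)"
      by (rule negligible_differentiable_image_negligible[OF _ C]) (auto intro!: derivative_intros)
    show "negligible S" unfolding S using 1 2 by simp
  qed
  then show ?thesis using sub by (rule negligible_subset)
qed

lemma fold_meas: "fold_pi \<in> measurable lebesgue I01"
proof (rule measurable_restrict_space2)
  show "fold_pi \<in> space lebesgue \<rightarrow> {0..1}" using fold_range by auto
  show "fold_pi \<in> lebesgue \<rightarrow>\<^sub>M lebesgue"
  proof (rule measurableI)
    fix x show "fold_pi x \<in> space lebesgue" by simp
  next
    fix B :: "real set" assume "B \<in> sets lebesgue"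
    then obtain S N N' :: "real set" where B: "B = S \<union> N" "N \<subseteq> N'" "N' \<in> null_sets lborel" "S \<in> sets lborel"
      by (auto elim: sets_completionE)
    have "N' \<in> null_sets lebesgue" using B(3) by (rule null_sets_completionI)
    then have "negligible N'" by (simp add: negligible_iff_null_sets)
    then have "negligible N" using B(2) by (rule negligible_subset)
    then have "negligible (fold_pi -` N)" by (rule fold_neg)
    then have n: "fold_pi -` N \<in> sets lebesgue" by (rule negligible_imp_sets)
    have s: "fold_pi -` S \<in> sets lebesgue"
    proof -
      have "fold_pi -` S \<inter> space lborel \<in> sets lborel"
        using measurable_sets[OF fold_borel, of S] B(4) by simp
      then show ?thesis by (auto intro: sets_completionI_sets)
    qed
    show "fold_pi -` B \<inter> space lebesgue \<in> sets lebesgue" using n s unfolding B(1) by auto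
  qed
qed

lemma fold_ns:
  assumes A: "A \<in> sets I01" and z: "emeasure I01 A = 0"
  shows "emeasure lebesgue (fold_pi -` A \<inter> space lebesgue) = 0"
proof -
  have A': "A \<in> sets lebesgue" and Asub: "A \<subseteq> {0..1}"
    using A by (auto simp: sets_restrict_space_iff)
  have "emeasure lebesgue A = 0" using z A' Asub by (simp add: emeasure_restrict_space Int_absorb2)
  then have "negligible A" using A' by (simp add: negligible_iff_emeasure0)
  then have "negligible (fold_pi -` A)" by (rule fold_neg)
  then show ?thesis using negligible_iff_null_sets by auto
qed

interpretation FP: pushsys lebesgue fold_pi
proof
  show "fold_pi \<in> lebesgue \<rightarrow>\<^sub>M I01" by (rule fold_meas)
  fix A assume "A \<in> sets I01" "emeasure I01 A = 0"
  then show "emeasure lebesgue (fold_pi -` A \<inter> space lebesgue) = 0" by (rule fold_ns)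
qed

lemma L_good:
  assumes T: "nonsingular T"
  shows "good (transfer_op T)"
proof -
  have Tm: "T \<in> measurable I01 I01" and Tn: "\<And>A. A \<in> sets I01 \<Longrightarrow> emeasure I01 A = 0 \<Longrightarrow> emeasure I01 (T -` A \<inter> space I01) = 0"
    using T unfolding nonsingular_def by auto
  interpret TP: pushsys I01 T
  proof
    show "T \<in> I01 \<rightarrow>\<^sub>M I01" by (rule Tm)
    fix A assume "A \<in> sets I01" "emeasure I01 A = 0"
    then show "emeasure I01 (T -` A \<inter> space I01) = 0" by (rule Tn)
  qed
  have tr: "transfer_op T = push_dens I01 I01 T" by (simp add: transfer_op_def)
  show ?thesis unfolding good_def tr
  proof (intro conjI allI impI)
    fix f :: "real \<Rightarrow> real" assume f: "integrable I01 f"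
    show "integrable I01 (push_dens I01 I01 T f)" by (rule TP.int_push[OF f])
    show "(\<integral>x. push_dens I01 I01 T f x \<partial>I01) = (\<integral>x. f x \<partial>I01)" by (rule TP.integral_push[OF f])
    assume "AE x in I01. 0 \<le> f x"
    then show "AE x in I01. 0 \<le> push_dens I01 I01 T f x" by (rule TP.push_pos[OF f])
  next
    fix f g :: "real \<Rightarrow> real" assume f: "integrable I01 f" and g: "integrable I01 g"
      and e: "AE x in I01. f x = g x"
    have "push_dens I01 I01 T f = push_dens I01 I01 T g"
      using f g e by (intro TP.push_cong) auto
    then show "AE x in I01. push_dens I01 I01 T f x = push_dens I01 I01 T g x" by simp
  next
    fix f g :: "real \<Rightarrow> real" and a b :: real assume f: "integrable I01 f" and g: "integrable I01 g"
    show "AE x in I01. push_dens I01 I01 T (\<lambda>x. a * f x + b * g x) x =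
           a * push_dens I01 I01 T f x + b * push_dens I01 I01 T g x"
      by (rule TP.push_lin[OF f g])
  qed
qed

lemma ext0_lin: "ext0 (\<lambda>x. a * f x + b * g x) = (\<lambda>x. a * ext0 f x + b * ext0 g x)"
  by (auto simp: ext0_def fun_eq_iff)

lemma conv_lin:
  fixes f g :: "real \<Rightarrow> real"
  assumes f: "integrable I01 f" and g: "integrable I01 g"
  shows "conv (rho \<xi>) (ext0 (\<lambda>x. a * f x + b * g x))
       = (\<lambda>y. a * conv (rho \<xi>) (ext0 f) y + b * conv (rho \<xi>) (ext0 g) y)"
proof
  fix y
  have i1: "integrable lebesgue (\<lambda>x. rho \<xi> (y - x) * ext0 f x)" by (rule conv_integrand[OF ext0_int(1)[OF f]])
  have i2: "integrable lebesgue (\<lambda>x. rho \<xi> (y - x) * ext0 g x)" by (rule conv_integrand[OF ext0_int(1)[OF g]])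
  have "conv (rho \<xi>) (ext0 (\<lambda>x. a * f x + b * g x)) y
      = (\<integral>x. a * (rho \<xi> (y - x) * ext0 f x) + b * (rho \<xi> (y - x) * ext0 g x) \<partial>lebesgue)"
    unfolding conv_def ext0_lin by (simp add: algebra_simps)
  also have "\<dots> = a * (\<integral>x. rho \<xi> (y - x) * ext0 f x \<partial>lebesgue) + b * (\<integral>x. rho \<xi> (y - x) * ext0 g x \<partial>lebesgue)"
    using i1 i2 by (subst Bochner_Integration.integral_add) auto
  finally show "conv (rho \<xi>) (ext0 (\<lambda>x. a * f x + b * g x)) y
       = a * conv (rho \<xi>) (ext0 f) y + b * conv (rho \<xi>) (ext0 g) y" by (simp add: conv_def)
qed

lemma ext0_ae:
  fixes f g :: "real \<Rightarrow> real"
  assumes e: "AE x in I01. f x = g x"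
  shows "AE x in lebesgue. ext0 f x = ext0 g x"
proof -
  have "AE x in lebesgue. x \<in> {0..1} \<longrightarrow> f x = g x"
    using e by (subst (asm) AE_restrict_space_iff) auto
  then show ?thesis by eventually_elim (auto simp: ext0_def)
qed

lemma conv_cong:
  fixes f g :: "real \<Rightarrow> real"
  assumes f: "integrable I01 f" and g: "integrable I01 g" and e: "AE x in I01. f x = g x"
  shows "conv (rho \<xi>) (ext0 f) = conv (rho \<xi>) (ext0 g)"
proof
  fix y
  have i1: "integrable lebesgue (\<lambda>x. rho \<xi> (y - x) * ext0 f x)" by (rule conv_integrand[OF ext0_int(1)[OF f]])
  have i2: "integrable lebesgue (\<lambda>x. rho \<xi> (y - x) * ext0 g x)" by (rule conv_integrand[OF ext0_int(1)[OF g]])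
  show "conv (rho \<xi>) (ext0 f) y = conv (rho \<xi>) (ext0 g) y"
    unfolding conv_def using ext0_ae[OF e] i1 i2 by (intro integral_cong_AE) auto
qed

lemma ext0_nonneg:
  fixes f :: "real \<Rightarrow> real"
  assumes "AE x in I01. 0 \<le> f x"
  shows "AE x in lebesgue. 0 \<le> ext0 f x"
proof -
  have "AE x in lebesgue. x \<in> {0..1} \<longrightarrow> 0 \<le> f x"
    using assms by (subst (asm) AE_restrict_space_iff) auto
  then show ?thesis by eventually_elim (auto simp: ext0_def)
qed

lemma rho_nonneg: "0 < \<xi> \<Longrightarrow> 0 \<le> rho \<xi> t"
  by (simp add: rho_def)

lemma conv_nonneg:
  fixes f :: "real \<Rightarrow> real"
  assumes \<xi>: "0 < \<xi>" and n: "AE x in I01. 0 \<le> f x"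
  shows "0 \<le> conv (rho \<xi>) (ext0 f) y"
  unfolding conv_def using ext0_nonneg[OF n]
  by (intro integral_nonneg_AE) (auto intro: mult_nonneg_nonneg rho_nonneg[OF \<xi>])

lemma rho_compare:
  assumes "0 < \<xi>" "\<xi> < \<xi>'"
  shows "(\<xi> / \<xi>') * rho \<xi> t \<le> rho \<xi>' t"
  using assms unfolding rho_def by (auto simp: field_simps)

lemma conv_compare:
  fixes f :: "real \<Rightarrow> real"
  assumes \<xi>: "0 < \<xi>" "\<xi> < \<xi>'" and f: "integrable I01 f" and n: "AE x in I01. 0 \<le> f x"
  shows "(\<xi> / \<xi>') * conv (rho \<xi>) (ext0 f) y \<le> conv (rho \<xi>') (ext0 f) y"
proof -
  have i1: "integrable lebesgue (\<lambda>x. rho \<xi> (y - x) * ext0 f x)" by (rule conv_integrand[OF ext0_int(1)[OF f]])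
  have i2: "integrable lebesgue (\<lambda>x. rho \<xi>' (y - x) * ext0 f x)" by (rule conv_integrand[OF ext0_int(1)[OF f]])
  have "(\<xi> / \<xi>') * conv (rho \<xi>) (ext0 f) y = (\<integral>x. (\<xi> / \<xi>') * (rho \<xi> (y - x) * ext0 f x) \<partial>lebesgue)"
    unfolding conv_def by simp
  also have "\<dots> \<le> conv (rho \<xi>') (ext0 f) y"
    unfolding conv_def
  proof (rule integral_mono_AE)
    show "integrable lebesgue (\<lambda>x. (\<xi> / \<xi>') * (rho \<xi> (y - x) * ext0 f x))" using i1 by simp
    show "integrable lebesgue (\<lambda>x. rho \<xi>' (y - x) * ext0 f x)" by (rule i2)
    show "AE x in lebesgue. (\<xi> / \<xi>') * (rho \<xi> (y - x) * ext0 f x) \<le> rho \<xi>' (y - x) * ext0 f x"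
      using ext0_nonneg[OF n]
    proof eventually_elim
      case (elim x)
      have "(\<xi> / \<xi>') * (rho \<xi> (y - x) * ext0 f x) = ((\<xi> / \<xi>') * rho \<xi> (y - x)) * ext0 f x" by simp
      also have "\<dots> \<le> rho \<xi>' (y - x) * ext0 f x"
        using rho_compare[OF \<xi>, of "y - x"] elim by (intro mult_right_mono) auto
      finally show ?case .
    qed
  qed
  finally show ?thesis .
qed

lemma N_good:
  assumes \<xi>: "0 < \<xi>"
  shows "good (noise_op \<xi>)"
proof -
  have nd: "noise_op \<xi> = (\<lambda>f. push_dens lebesgue I01 fold_pi (conv (rho \<xi>) (ext0 f)))"
    by (simp add: fun_eq_iff noise_op_def)
  show ?thesis unfolding good_def nd
  proof (intro conjI allI impI)
    fix f :: "real \<Rightarrow> real" assume f: "integrable I01 f"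
    note c1 = conv_main(1)[OF \<xi> f] and c2 = conv_main(2)[OF \<xi> f]
    show "integrable I01 (push_dens lebesgue I01 fold_pi (conv (rho \<xi>) (ext0 f)))" by (rule FP.int_push[OF c1])
    show "(\<integral>x. push_dens lebesgue I01 fold_pi (conv (rho \<xi>) (ext0 f)) x \<partial>I01) = (\<integral>x. f x \<partial>I01)"
      using FP.integral_push[OF c1] c2 by simp
    assume n: "AE x in I01. 0 \<le> f x"
    show "AE x in I01. 0 \<le> push_dens lebesgue I01 fold_pi (conv (rho \<xi>) (ext0 f)) x"
      by (rule FP.push_pos[OF c1]) (use conv_nonneg[OF \<xi> n] in auto)
  next
    fix f g :: "real \<Rightarrow> real" assume f: "integrable I01 f" and g: "integrable I01 g"
      and e: "AE x in I01. f x = g x"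
    show "AE x in I01. push_dens lebesgue I01 fold_pi (conv (rho \<xi>) (ext0 f)) x
        = push_dens lebesgue I01 fold_pi (conv (rho \<xi>) (ext0 g)) x"
      using conv_cong[OF f g e, of \<xi>] by simp
  next
    fix f g :: "real \<Rightarrow> real" and a b :: real assume f: "integrable I01 f" and g: "integrable I01 g"
    show "AE x in I01. push_dens lebesgue I01 fold_pi (conv (rho \<xi>) (ext0 (\<lambda>x. a * f x + b * g x))) x =
           a * push_dens lebesgue I01 fold_pi (conv (rho \<xi>) (ext0 f)) x
         + b * push_dens lebesgue I01 fold_pi (conv (rho \<xi>) (ext0 g)) x"
      unfolding conv_lin[OF f g] by (rule FP.push_lin[OF conv_main(1)[OF \<xi> f] conv_main(1)[OF \<xi> g]])
  qed
qed

lemma N_compare: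
  fixes f :: "real \<Rightarrow> real"
  assumes \<xi>: "0 < \<xi>" "\<xi> < \<xi>'" and f: "integrable I01 f" and n: "AE x in I01. 0 \<le> f x"
  shows "AE y in I01. (\<xi> / \<xi>') * noise_op \<xi> f y \<le> noise_op \<xi>' f y"
proof -
  have \<xi>': "0 < \<xi>'" using \<xi> by simp
  define u where "u = conv (rho \<xi>') (ext0 f)"
  define v where "v = conv (rho \<xi>) (ext0 f)"
  have u: "integrable lebesgue u" unfolding u_def by (rule conv_main(1)[OF \<xi>' f])
  have v: "integrable lebesgue v" unfolding v_def by (rule conv_main(1)[OF \<xi>(1) f])
  have l: "AE y in I01. push_dens lebesgue I01 fold_pi (\<lambda>x. 1 * u x + (- (\<xi> / \<xi>')) * v x) y
     = 1 * push_dens lebesgue I01 fold_pi u y + (- (\<xi> / \<xi>')) * push_dens lebesgue I01 fold_pi v y"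
    by (rule FP.push_lin[OF u v])
  have uv: "integrable lebesgue (\<lambda>x. 1 * u x + (- (\<xi> / \<xi>')) * v x)" using u v by auto
  have p: "AE y in I01. 0 \<le> push_dens lebesgue I01 fold_pi (\<lambda>x. 1 * u x + (- (\<xi> / \<xi>')) * v x) y"
    by (rule FP.push_pos[OF uv]) (use conv_compare[OF \<xi> f n] in \<open>auto simp: u_def v_def\<close>)
  from l p show ?thesis
    by eventually_elim (simp add: noise_op_def u_def v_def)
qed

theorem corollary58:
  fixes T :: "real \<Rightarrow> real" and \<xi> :: real and i :: nat
  assumes "nonsingular T"
    and "\<xi> > 0"
    and "opnorm_V ((noise_op \<xi> \<circ> transfer_op T) ^^ i) < 1"
  shows "\<forall>\<xi>'>\<xi>. opnorm_V ((noise_op \<xi>' \<circ> transfer_op T) ^^ i) < 1 \<and> mixing T \<xi>'"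
proof (intro allI impI)
  fix \<xi>' :: real assume h: "\<xi>' > \<xi>"
  have \<xi>': "0 < \<xi>'" using h assms(2) by simp
  have L: "good (transfer_op T)" by (rule L_good[OF assms(1)])
  have gA: "good (noise_op \<xi>' \<circ> transfer_op T)" by (rule good_comp[OF N_good[OF \<xi>'] L])
  have gB: "good (noise_op \<xi> \<circ> transfer_op T)" by (rule good_comp[OF N_good[OF assms(2)] L])
  have c: "0 < \<xi> / \<xi>'" "\<xi> / \<xi>' \<le> 1" using h assms(2) by auto
  have comp: "AE x in I01. (\<xi> / \<xi>') * (noise_op \<xi> \<circ> transfer_op T) f x \<le> (noise_op \<xi>' \<circ> transfer_op T) f x"
    if f: "integrable I01 f" and n: "AE x in I01. 0 \<le> f x" for f
    using N_compare[OF assms(2) h good_int[OF L f] good_pos[OF L f n]] by simp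
  from abstract_final[OF gA gB c comp assms(3)]
  show "opnorm_V ((noise_op \<xi>' \<circ> transfer_op T) ^^ i) < 1 \<and> mixing T \<xi>'"
    unfolding mixing_def by blast
qed

end
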